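(* Let $\mathcal{S}\subseteq\mathbb{S}^{d-1}$ with $|\mathcal{S}|=n$, and let $\mathcal{D}$ be a (randomized) linear-space bucket data structure for the $(\alpha,\beta)$-ANN problem on $\mathcal{S}$ in which each point of $\mathcal{S}$ is stored in at most one bucket. Fix a query $q\in\mathbb{S}^{d-1}$ and suppose that each point of $\mathcal{S}\cap B(q,\alpha)$ lies in a bucket inspected by $q$ with probability $1-o(1)$, and that the expected number of points of $\mathcal{S}\setminus B(q,\beta)$ lying in buckets inspected by $q$ is at most $n^{\rho+o(1)}$. Let $\widehat{\mathrm{ans}}$ be the sum, over the buckets inspected by $q$, of the number of points stored in the bucket. Then with probability at least $2/3$, $$(1-o(1))|\mathcal{S}\cap B(q,\alpha)|\le\widehat{\mathrm{ans}}\le|\mathcal{S}\cap B(q,\beta)|+n^{\rho+o(1)}.$$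
   Context: $\mathbb{S}^{d-1}$ is the unit sphere in $\mathbb{R}^d$, $B(q,\alpha)=\{x\in\mathbb{S}^{d-1}:\langle q,x\rangle\ge\alpha\}$, $0\le\beta<\alpha<1$. A bucket data structure stores points of $\mathcal{S}$ in buckets (e.g. of a hash table); a query $q$ determines a set of buckets it inspects, and the $(\alpha,\beta)$-ANN query scans the points in these buckets. The counting version replaces each bucket by the number of points stored in it and returns the sum of these counts over the inspected buckets. Asymptotic notation is as $n\to\infty$. *)

theory Defs
  imports "HOL-Probability.Probability"
begin

text \<open>Points of R^d are represented as functions nat => real vanishing outside {..<d},
  so that the dimension d may depend on n.\<close>

definition dinner :: "nat \<Rightarrow> (nat \<Rightarrow> real) \<Rightarrow> (nat \<Rightarrow> real) \<Rightarrow> real" where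
  "dinner d x y = (\<Sum>i<d. x i * y i)"

definition usphere :: "nat \<Rightarrow> (nat \<Rightarrow> real) set" where
  "usphere d = {x. (\<forall>i\<ge>d. x i = 0) \<and> dinner d x x = 1}"

definition cap :: "nat \<Rightarrow> (nat \<Rightarrow> real) \<Rightarrow> real \<Rightarrow> (nat \<Rightarrow> real) set" where
  "cap d q a = {x \<in> usphere d. dinner d q x \<ge> a}"

definition inspected_points :: "('b \<Rightarrow> 'p set) \<Rightarrow> 'b set \<Rightarrow> 'p set" where
  "inspected_points bucket Ins = (\<Union>b\<in>Ins. bucket b)"

definition count_answer :: "('b \<Rightarrow> 'p set) \<Rightarrow> 'b set \<Rightarrow> nat" where
  "count_answer bucket Ins = (\<Sum>b\<in>Ins. card (bucket b))"

end

theory Submission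
  imports Defs "HOL-Real_Asymp.Real_Asymp"
begin

lemma cnt_eq:
  assumes "finite T" "\<omega> \<in> space M"
  shows "real (card (T \<inter> IP \<omega>)) = (\<Sum>x\<in>T. indicator {\<omega>\<in>space M. x \<in> IP \<omega>} \<omega>)"
proof -
  have "(\<Sum>x\<in>T. indicator {\<omega>\<in>space M. x \<in> IP \<omega>} \<omega>) = (\<Sum>x\<in>T. (indicator (IP \<omega>) x :: real))"
    using assms(2) by (intro sum.cong) (auto simp: indicator_def)
  also have "\<dots> = real (card (T \<inter> IP \<omega>))"
    using assms(1) by (simp add: indicator_def sum.If_cases Int_def)
  finally show ?thesis by simp
qed

lemma cnt_meas:
  assumes "finite T" "\<forall>x\<in>T. {\<omega>\<in>space M. x \<in> IP \<omega>} \<in> sets M"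
  shows "(\<lambda>\<omega>. real (card (T \<inter> IP \<omega>))) \<in> borel_measurable M"
proof -
  have "(\<lambda>\<omega>. (\<Sum>x\<in>T. indicator {\<omega>\<in>space M. x \<in> IP \<omega>} \<omega>) :: real) \<in> borel_measurable M"
    using assms(2) by (intro borel_measurable_sum) auto
  then show ?thesis
    by (rule measurable_cong[THEN iffD1, rotated]) (simp add: cnt_eq[OF assms(1)])
qed

lemma cnt_int:
  assumes "prob_space M" "finite T" "\<forall>x\<in>T. {\<omega>\<in>space M. x \<in> IP \<omega>} \<in> sets M"
  shows "integrable M (\<lambda>\<omega>. real (card (T \<inter> IP \<omega>)))"
    "(\<integral>\<omega>. real (card (T \<inter> IP \<omega>)) \<partial>M) = (\<Sum>x\<in>T. measure M {\<omega>\<in>space M. x \<in> IP \<omega>})"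
proof -
  interpret prob_space M by fact
  have i: "integrable M (\<lambda>\<omega>. (\<Sum>x\<in>T. indicator {\<omega>\<in>space M. x \<in> IP \<omega>} \<omega>) :: real)"
  proof (rule Bochner_Integration.integrable_sum)
    fix x assume "x \<in> T"
    then have "{\<omega>\<in>space M. x \<in> IP \<omega>} \<in> sets M" using assms(3) by blast
    then show "integrable M (indicator {\<omega>\<in>space M. x \<in> IP \<omega>} :: _ \<Rightarrow> real)"
      by (intro integrable_real_indicator) (auto simp: emeasure_eq_measure)
  qed
  have e: "AE \<omega> in M. (\<Sum>x\<in>T. indicator {\<omega>\<in>space M. x \<in> IP \<omega>} \<omega>) = real (card (T \<inter> IP \<omega>))"
    by (intro AE_I2) (simp add: cnt_eq[OF assms(2)])
  show "integrable M (\<lambda>\<omega>. real (card (T \<inter> IP \<omega>)))"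
    using integrable_cong_AE_imp[OF i cnt_meas[OF assms(2,3)] e] .
  have "(\<integral>\<omega>. real (card (T \<inter> IP \<omega>)) \<partial>M) = (\<integral>\<omega>. (\<Sum>x\<in>T. indicator {\<omega>\<in>space M. x \<in> IP \<omega>} \<omega>) \<partial>M)"
    by (rule Bochner_Integration.integral_cong) (simp_all add: cnt_eq[OF assms(2)])
  also have "\<dots> = (\<Sum>x\<in>T. measure M {\<omega>\<in>space M. x \<in> IP \<omega>})"
  proof (subst Bochner_Integration.integral_sum)
    fix x assume "x \<in> T"
    then have "{\<omega>\<in>space M. x \<in> IP \<omega>} \<in> sets M" using assms(3) by blast
    then show "integrable M (indicator {\<omega>\<in>space M. x \<in> IP \<omega>} :: _ \<Rightarrow> real)"
      by (intro integrable_real_indicator) (auto simp: emeasure_eq_measure)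
  next
    show "(\<Sum>x\<in>T. integral\<^sup>L M (indicator {\<omega>\<in>space M. x \<in> IP \<omega>})) = (\<Sum>x\<in>T. measure M {\<omega>\<in>space M. x \<in> IP \<omega>})"
      by (intro sum.cong refl) (simp add: Int_absorb2)
  qed
  finally show "(\<integral>\<omega>. real (card (T \<inter> IP \<omega>)) \<partial>M) = (\<Sum>x\<in>T. measure M {\<omega>\<in>space M. x \<in> IP \<omega>})" .
qed

lemma key:
  assumes P: "prob_space M" and fin: "finite S" and AS: "A \<subseteq> S" and FS: "F \<subseteq> S"
    and meas: "\<forall>x\<in>S. {\<omega>\<in>space M. x \<in> IP \<omega>} \<in> sets M"
    and e: "e > 0" and rec: "\<forall>x\<in>A. measure M {\<omega>\<in>space M. x \<in> IP \<omega>} \<ge> 1 - e"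
    and K: "K > 0" and far: "(\<integral>\<omega>. real (card (F \<inter> IP \<omega>)) \<partial>M) \<le> K"
  shows "measure M {\<omega>\<in>space M. (1 - 6*e) * real (card A) \<le> real (card (A \<inter> IP \<omega>))
            \<and> real (card (F \<inter> IP \<omega>)) \<le> 6*K} \<ge> 2/3"
proof -
  interpret prob_space M by fact
  have finA: "finite A" and finF: "finite F" using fin AS FS finite_subset by auto
  have mA: "\<forall>x\<in>A. {\<omega>\<in>space M. x \<in> IP \<omega>} \<in> sets M" using meas AS by blast
  have mF: "\<forall>x\<in>F. {\<omega>\<in>space M. x \<in> IP \<omega>} \<in> sets M" using meas FS by blast
  define X where "X = (\<lambda>\<omega>. real (card (A \<inter> IP \<omega>)))"
  define Y where "Y = (\<lambda>\<omega>. real (card (F \<inter> IP \<omega>)))"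
  define a where "a = real (card A)"
  have [measurable]: "X \<in> borel_measurable M" unfolding X_def by (rule cnt_meas[OF finA mA])
  have [measurable]: "Y \<in> borel_measurable M" unfolding Y_def by (rule cnt_meas[OF finF mF])
  have iX: "integrable M X" and EX: "(\<integral>\<omega>. X \<omega> \<partial>M) = (\<Sum>x\<in>A. measure M {\<omega>\<in>space M. x \<in> IP \<omega>})"
    unfolding X_def using cnt_int[OF P finA mA] by auto
  have iY: "integrable M Y" unfolding Y_def using cnt_int[OF P finF mF] by auto
  have Xle: "X \<omega> \<le> a" for \<omega> unfolding X_def a_def using finA by (simp add: card_mono)
  define B1 where "B1 = {\<omega>\<in>space M. (1 - 6*e) * a > X \<omega>}"
  define B2 where "B2 = {\<omega>\<in>space M. Y \<omega> > 6*K}"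
  have [measurable]: "B1 \<in> sets M" unfolding B1_def by measurable
  have [measurable]: "B2 \<in> sets M" unfolding B2_def by measurable
  have p1: "measure M B1 \<le> 1/6"
  proof (cases "a = 0")
    case True
    then have "B1 = {}" unfolding B1_def X_def by auto
    then show ?thesis by simp
  next
    case False
    then have apos: "a > 0" unfolding a_def by simp
    have "(\<Sum>x\<in>A. measure M {\<omega>\<in>space M. x \<in> IP \<omega>}) \<ge> (\<Sum>x\<in>A. 1 - e)"
      using rec by (intro sum_mono) auto
    then have EXge: "(\<integral>\<omega>. X \<omega> \<partial>M) \<ge> a * (1 - e)" using EX unfolding a_def by simp
    have iu: "integrable M (\<lambda>\<omega>. a - X \<omega>)" using iX by simp
    have Eu: "(\<integral>\<omega>. a - X \<omega> \<partial>M) = a - (\<integral>\<omega>. X \<omega> \<partial>M)"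
      using iX by (simp add: prob_space)
    have "B1 \<subseteq> {\<omega>\<in>space M. a - X \<omega> \<ge> 6*e*a}" unfolding B1_def by (auto simp: algebra_simps)
    then have "measure M B1 \<le> measure M {\<omega>\<in>space M. a - X \<omega> \<ge> 6*e*a}"
      by (intro finite_measure_mono) measurable
    also have "\<dots> \<le> (\<integral>\<omega>. a - X \<omega> \<partial>M) / (6*e*a)"
      by (rule integral_Markov_inequality_measure[OF iu, of "space M"]) (use Xle e apos in auto)
    also have "\<dots> \<le> (e*a) / (6*e*a)"
      using Eu EXge e apos by (intro divide_right_mono) (auto simp: algebra_simps)
    also have "\<dots> = 1/6" using e apos by simp
    finally show ?thesis .
  qed
  have p2: "measure M B2 \<le> 1/6"
  proof -
    have "B2 \<subseteq> {\<omega>\<in>space M. Y \<omega> \<ge> 6*K}" unfolding B2_def by auto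
    then have "measure M B2 \<le> measure M {\<omega>\<in>space M. Y \<omega> \<ge> 6*K}"
      by (intro finite_measure_mono) measurable
    also have "\<dots> \<le> (\<integral>\<omega>. Y \<omega> \<partial>M) / (6*K)"
      by (rule integral_Markov_inequality_measure[OF iY, of "space M"]) (use K in \<open>auto simp: Y_def\<close>)
    also have "\<dots> \<le> K / (6*K)"
      using far K unfolding Y_def by (intro divide_right_mono) auto
    also have "\<dots> = 1/6" using K by simp
    finally show ?thesis .
  qed
  have eq: "{\<omega>\<in>space M. (1 - 6*e) * real (card A) \<le> real (card (A \<inter> IP \<omega>))
            \<and> real (card (F \<inter> IP \<omega>)) \<le> 6*K} = space M - (B1 \<union> B2)"
    unfolding B1_def B2_def X_def Y_def a_def by auto
  have "measure M (space M - (B1 \<union> B2)) = 1 - measure M (B1 \<union> B2)"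
    by (subst finite_measure_compl) (auto simp: prob_space)
  moreover have "measure M (B1 \<union> B2) \<le> 1/3"
    using measure_Un_le[of B1 M B2] p1 p2 by simp
  ultimately show ?thesis unfolding eq by simp
qed

theorem lemma2:
  fixes d :: "nat \<Rightarrow> nat"
    and S :: "nat \<Rightarrow> (nat \<Rightarrow> real) set"
    and q :: "nat \<Rightarrow> (nat \<Rightarrow> real)"
    and \<alpha> \<beta> \<rho> C :: real
    and M :: "nat \<Rightarrow> 'w measure"
    and Bk :: "nat \<Rightarrow> 'w \<Rightarrow> 'b set"
    and bucket :: "nat \<Rightarrow> 'w \<Rightarrow> 'b \<Rightarrow> (nat \<Rightarrow> real) set"
    and Ins :: "nat \<Rightarrow> 'w \<Rightarrow> 'b set"
  assumes "0 \<le> \<beta>" and "\<beta> < \<alpha>" and "\<alpha> < 1"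
    and S: "\<forall>n. S n \<subseteq> usphere (d n) \<and> finite (S n) \<and> card (S n) = n"
    and q: "\<forall>n. q n \<in> usphere (d n)"
    and prob: "\<forall>n. prob_space (M n)"
    and linear_space: "\<forall>n. \<forall>\<omega>\<in>space (M n). finite (Bk n \<omega>) \<and> real (card (Bk n \<omega>)) \<le> C * real n"
    and stored: "\<forall>n. \<forall>\<omega>\<in>space (M n). \<forall>b\<in>Bk n \<omega>. bucket n \<omega> b \<subseteq> S n"
    and at_most_one_bucket: "\<forall>n. \<forall>\<omega>\<in>space (M n). \<forall>b\<in>Bk n \<omega>. \<forall>b'\<in>Bk n \<omega>.
           b \<noteq> b' \<longrightarrow> bucket n \<omega> b \<inter> bucket n \<omega> b' = {}"
    and inspected: "\<forall>n. \<forall>\<omega>\<in>space (M n). Ins n \<omega> \<subseteq> Bk n \<omega>"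
    and meas: "\<forall>n. \<forall>x\<in>S n.
           {\<omega> \<in> space (M n). x \<in> inspected_points (bucket n \<omega>) (Ins n \<omega>)} \<in> sets (M n)"
    and recall: "\<exists>\<epsilon>::nat \<Rightarrow> real. \<epsilon> \<longlonglongrightarrow> 0 \<and>
           (\<forall>n. \<forall>x\<in>S n \<inter> cap (d n) (q n) \<alpha>.
              measure (M n) {\<omega> \<in> space (M n). x \<in> inspected_points (bucket n \<omega>) (Ins n \<omega>)} \<ge> 1 - \<epsilon> n)"
    and far: "\<exists>\<delta>::nat \<Rightarrow> real. \<delta> \<longlonglongrightarrow> 0 \<and>
           (\<forall>n. (\<integral>\<omega>. real (card ((S n - cap (d n) (q n) \<beta>) \<inter> inspected_points (bucket n \<omega>) (Ins n \<omega>))) \<partial>M n)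
              \<le> real n powr (\<rho> + \<delta> n))"
  shows "\<exists>\<epsilon> \<delta> :: nat \<Rightarrow> real. \<epsilon> \<longlonglongrightarrow> 0 \<and> \<delta> \<longlonglongrightarrow> 0 \<and>
           (\<forall>\<^sub>F n in sequentially.
              measure (M n) {\<omega> \<in> space (M n).
                 (1 - \<epsilon> n) * real (card (S n \<inter> cap (d n) (q n) \<alpha>)) \<le> real (count_answer (bucket n \<omega>) (Ins n \<omega>))
               \<and> real (count_answer (bucket n \<omega>) (Ins n \<omega>)) \<le> real (card (S n \<inter> cap (d n) (q n) \<beta>)) + real n powr (\<rho> + \<delta> n)}
              \<ge> 2/3)"
proof -
  from recall obtain \<epsilon> :: "nat \<Rightarrow> real" where e0: "\<epsilon> \<longlonglongrightarrow> 0"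
    and rec: "\<forall>n. \<forall>x\<in>S n \<inter> cap (d n) (q n) \<alpha>.
              measure (M n) {\<omega> \<in> space (M n). x \<in> inspected_points (bucket n \<omega>) (Ins n \<omega>)} \<ge> 1 - \<epsilon> n"
    by blast
  from far obtain \<delta> :: "nat \<Rightarrow> real" where d0: "\<delta> \<longlonglongrightarrow> 0"
    and fr: "\<forall>n. (\<integral>\<omega>. real (card ((S n - cap (d n) (q n) \<beta>) \<inter> inspected_points (bucket n \<omega>) (Ins n \<omega>))) \<partial>M n)
              \<le> real n powr (\<rho> + \<delta> n)"
    by blast
  define e where "e = (\<lambda>n. \<bar>\<epsilon> n\<bar> + 1 / (real n + 1))"
  define \<epsilon>' where "\<epsilon>' = (\<lambda>n. 6 * e n)"
  define \<delta>' where "\<delta>' = (\<lambda>n. \<delta> n + ln 6 / ln (real n))"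
  have l1: "(\<lambda>n. 1 / (real n + 1)) \<longlonglongrightarrow> 0" by real_asymp
  have l2: "(\<lambda>n. ln 6 / ln (real n)) \<longlonglongrightarrow> 0" by real_asymp
  have "e \<longlonglongrightarrow> 0" unfolding e_def using tendsto_add[OF tendsto_rabs_zero[OF e0] l1] by simp
  then have E: "\<epsilon>' \<longlonglongrightarrow> 0" unfolding \<epsilon>'_def by (rule tendsto_mult_right_zero)
  have D: "\<delta>' \<longlonglongrightarrow> 0" unfolding \<delta>'_def using tendsto_add[OF d0 l2] by simp
  have ev: "\<forall>\<^sub>F n in sequentially. n \<ge> 2" by (rule eventually_ge_at_top)
  show ?thesis
  proof (intro exI conjI)
    show "\<epsilon>' \<longlonglongrightarrow> 0" by (fact E)
    show "\<delta>' \<longlonglongrightarrow> 0" by (fact D)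
    show "\<forall>\<^sub>F n in sequentially.
              measure (M n) {\<omega> \<in> space (M n).
                 (1 - \<epsilon>' n) * real (card (S n \<inter> cap (d n) (q n) \<alpha>)) \<le> real (count_answer (bucket n \<omega>) (Ins n \<omega>))
               \<and> real (count_answer (bucket n \<omega>) (Ins n \<omega>)) \<le> real (card (S n \<inter> cap (d n) (q n) \<beta>)) + real n powr (\<rho> + \<delta>' n)}
              \<ge> 2/3"
      using ev
    proof eventually_elim
      case (elim n)
      define IP where "IP = (\<lambda>\<omega>. inspected_points (bucket n \<omega>) (Ins n \<omega>))"
      define A where "A = S n \<inter> cap (d n) (q n) \<alpha>"
      define F where "F = S n - cap (d n) (q n) \<beta>"
      define K where "K = real n powr (\<rho> + \<delta> n)"
      interpret prob_space "M n" using prob by blast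
      have finS: "finite (S n)" using S by blast
      have Kpos: "K > 0" unfolding K_def using elim by simp
      have epos: "e n > 0" unfolding e_def by (auto intro: add_nonneg_pos)
      have K6: "6 * K = real n powr (\<rho> + \<delta>' n)"
      proof -
        have "real n powr (\<rho> + \<delta>' n) = K * real n powr (ln 6 / ln (real n))"
          unfolding K_def \<delta>'_def by (simp add: powr_add add.assoc)
        also have "real n powr (ln 6 / ln (real n)) = 6"
          using elim by (simp add: powr_def)
        finally show ?thesis by simp
      qed
      have IPS: "IP \<omega> \<subseteq> S n" if w: "\<omega> \<in> space (M n)" for \<omega>
      proof -
        have "\<forall>b\<in>Bk n \<omega>. bucket n \<omega> b \<subseteq> S n" using stored w by blast
        moreover have "Ins n \<omega> \<subseteq> Bk n \<omega>" using inspected w by blast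
        ultimately show ?thesis unfolding IP_def inspected_points_def by blast
      qed
      have cnt: "count_answer (bucket n \<omega>) (Ins n \<omega>) = card (IP \<omega>)" if w: "\<omega> \<in> space (M n)" for \<omega>
      proof -
        have sub: "Ins n \<omega> \<subseteq> Bk n \<omega>" using inspected w by blast
        have "finite (Bk n \<omega>)" using linear_space w by blast
        then have fI: "finite (Ins n \<omega>)" using sub by (rule finite_subset[rotated])
        have st: "\<forall>b\<in>Bk n \<omega>. bucket n \<omega> b \<subseteq> S n" using stored w by blast
        have fb: "\<forall>b\<in>Ins n \<omega>. finite (bucket n \<omega> b)"
        proof
          fix b assume "b \<in> Ins n \<omega>"
          then have "bucket n \<omega> b \<subseteq> S n" using st sub by blast
          then show "finite (bucket n \<omega> b)" using finS by (rule finite_subset)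
        qed
        have dj0: "\<forall>b\<in>Bk n \<omega>. \<forall>b'\<in>Bk n \<omega>. b \<noteq> b' \<longrightarrow> bucket n \<omega> b \<inter> bucket n \<omega> b' = {}"
          using at_most_one_bucket w by blast
        have dj: "\<forall>b\<in>Ins n \<omega>. \<forall>b'\<in>Ins n \<omega>. b \<noteq> b' \<longrightarrow> bucket n \<omega> b \<inter> bucket n \<omega> b' = {}"
          using dj0 sub by blast
        show ?thesis unfolding count_answer_def IP_def inspected_points_def
          using card_UN_disjoint[OF fI fb dj] by simp
      qed
      have mS: "\<forall>x\<in>S n. {\<omega>\<in>space (M n). x \<in> IP \<omega>} \<in> sets (M n)" using meas unfolding IP_def by blast
      have Pn: "prob_space (M n)" using prob by blast
      have AS: "A \<subseteq> S n" unfolding A_def by blast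
      have FS: "F \<subseteq> S n" unfolding F_def by blast
      have rec': "\<forall>x\<in>A. measure (M n) {\<omega>\<in>space (M n). x \<in> IP \<omega>} \<ge> 1 - e n"
      proof
        fix x assume "x \<in> A"
        then have "measure (M n) {\<omega>\<in>space (M n). x \<in> IP \<omega>} \<ge> 1 - \<epsilon> n"
          using rec unfolding A_def IP_def by blast
        moreover have "\<epsilon> n \<le> e n" unfolding e_def by (simp add: add_increasing2)
        ultimately show "measure (M n) {\<omega>\<in>space (M n). x \<in> IP \<omega>} \<ge> 1 - e n" by linarith
      qed
      have far': "(\<integral>\<omega>. real (card (F \<inter> IP \<omega>)) \<partial>M n) \<le> K"
        using fr unfolding F_def IP_def K_def by blast
      have key': "measure (M n) {\<omega>\<in>space (M n). (1 - 6 * e n) * real (card A) \<le> real (card (A \<inter> IP \<omega>))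
            \<and> real (card (F \<inter> IP \<omega>)) \<le> 6*K} \<ge> 2/3"
        by (rule key[OF Pn finS AS FS mS epos rec' Kpos far'])
      have [measurable]: "(\<lambda>\<omega>. real (card (S n \<inter> IP \<omega>))) \<in> borel_measurable (M n)"
        by (rule cnt_meas[OF finS mS])
      define T where "T = {\<omega> \<in> space (M n).
                 (1 - \<epsilon>' n) * real (card (S n \<inter> cap (d n) (q n) \<alpha>)) \<le> real (count_answer (bucket n \<omega>) (Ins n \<omega>))
               \<and> real (count_answer (bucket n \<omega>) (Ins n \<omega>)) \<le> real (card (S n \<inter> cap (d n) (q n) \<beta>)) + real n powr (\<rho> + \<delta>' n)}"
      have "T = {\<omega> \<in> space (M n).
                 (1 - \<epsilon>' n) * real (card (S n \<inter> cap (d n) (q n) \<alpha>)) \<le> real (card (S n \<inter> IP \<omega>))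
               \<and> real (card (S n \<inter> IP \<omega>)) \<le> real (card (S n \<inter> cap (d n) (q n) \<beta>)) + real n powr (\<rho> + \<delta>' n)}"
        unfolding T_def using cnt IPS by (auto simp: Int_absorb1)
      also have "\<dots> \<in> sets (M n)" by measurable
      finally have Tm: "T \<in> sets (M n)" .
      have sub: "{\<omega>\<in>space (M n). (1 - 6 * e n) * real (card A) \<le> real (card (A \<inter> IP \<omega>))
            \<and> real (card (F \<inter> IP \<omega>)) \<le> 6*K} \<subseteq> T"
      proof
        fix \<omega> assume "\<omega> \<in> {\<omega>\<in>space (M n). (1 - 6 * e n) * real (card A) \<le> real (card (A \<inter> IP \<omega>))
            \<and> real (card (F \<inter> IP \<omega>)) \<le> 6*K}"
        then have w: "\<omega> \<in> space (M n)" and h1: "(1 - 6 * e n) * real (card A) \<le> real (card (A \<inter> IP \<omega>))"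
          and h2: "real (card (F \<inter> IP \<omega>)) \<le> 6*K" by auto
        have fIP: "finite (IP \<omega>)" using IPS[OF w] finS finite_subset by blast
        have c1: "card (A \<inter> IP \<omega>) \<le> card (IP \<omega>)" using fIP by (intro card_mono) auto
        have "card (IP \<omega>) \<le> card ((S n \<inter> cap (d n) (q n) \<beta>) \<union> (F \<inter> IP \<omega>))"
          using IPS[OF w] finS by (intro card_mono) (auto simp: F_def)
        also have "\<dots> \<le> card (S n \<inter> cap (d n) (q n) \<beta>) + card (F \<inter> IP \<omega>)" by (rule card_Un_le)
        finally have c2: "real (card (IP \<omega>)) \<le> real (card (S n \<inter> cap (d n) (q n) \<beta>)) + real (card (F \<inter> IP \<omega>))"
          by linarith
        show "\<omega> \<in> T" unfolding T_def using w cnt[OF w] h1 h2 c1 c2 K6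
          unfolding \<epsilon>'_def A_def by auto
      qed
      have "measure (M n) T \<ge> 2/3"
        using key' finite_measure_mono[OF sub Tm] by linarith
      then show ?case unfolding T_def .
    qed
  qed
qed

end
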